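(* Let $E$ be a directed graph. The graph inverse semigroup $\mathcal S(E)$ admits a nontrivial strong grading (by some group) if and only if $E$ is nonempty and has no source vertices.
   Context: A directed graph $E=(E^0,E^1,\mathbf r,\mathbf s)$ has vertices $E^0$, edges $E^1$, source and range maps $\mathbf s,\mathbf r:E^1\to E^0$. A vertex $v$ is a source if $\mathbf r^{-1}(v)=\emptyset$. $\mathcal S(E)$ is the semigroup with zero generated by $E^0\cup E^1\cup\{e^{-1}:e\in E^1\}$ subject to: $vw=\delta_{v,w}v$ for $v,w\in E^0$; $\mathbf s(e)e=e\mathbf r(e)=e$; $\mathbf r(e)e^{-1}=e^{-1}\mathbf s(e)=e^{-1}$; $e^{-1}f=\delta_{e,f}\mathbf r(e)$ for $e,f\in E^1$. A $\Gamma$-grading of a semigroup $S$ with zero is a map $\deg:S\setminus\{0\}\to\Gamma$ with $\deg(st)=\deg(s)\deg(t)$ whenever $st\neq0$; $S_\alpha=\deg^{-1}(\alpha)\cup\{0\}$. It is trivial if $S_\alpha=\{0\}$ for all $\alpha\neq\varepsilon$ (the identity of $\Gamma$), and strong if $S_\alpha S_\beta=S_{\alpha\beta}$ for all $\alpha,\beta\in\Gamma$. *)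

theory Defs
  imports "HOL-Algebra.Group"
begin

text \<open>A directed graph E = (V, Ed, rg, sc): vertex set V, edge set Ed,
  range map rg and source map sc.  The graph inverse semigroup S(E) is the
  semigroup with zero presented by generators and relations.  We realise it as
  words over the generator alphabet modulo the congruence generated by the
  defining relations, with an adjoined zero (represented by None).\<close>

datatype ('v, 'e) gen = GV 'v | GE 'e | GI 'e

definition gis_gens :: "'v set \<Rightarrow> 'e set \<Rightarrow> ('v, 'e) gen set" where
  "gis_gens V Ed = GV ` V \<union> GE ` Ed \<union> GI ` Ed"

definition gis_word :: "'v set \<Rightarrow> 'e set \<Rightarrow> ('v, 'e) gen list \<Rightarrow> bool" where
  "gis_word V Ed w \<longleftrightarrow> w \<noteq> [] \<and> set w \<subseteq> gis_gens V Ed"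

inductive gis_rel :: "'v set \<Rightarrow> 'e set \<Rightarrow> ('e \<Rightarrow> 'v) \<Rightarrow> ('e \<Rightarrow> 'v)
    \<Rightarrow> ('v, 'e) gen list \<Rightarrow> ('v, 'e) gen list option \<Rightarrow> bool"
  for V Ed rg sc where
  vv_eq: "v \<in> V \<Longrightarrow> gis_rel V Ed rg sc [GV v, GV v] (Some [GV v])"
| vv_ne: "v \<in> V \<Longrightarrow> w \<in> V \<Longrightarrow> v \<noteq> w \<Longrightarrow> gis_rel V Ed rg sc [GV v, GV w] None"
| se: "e \<in> Ed \<Longrightarrow> gis_rel V Ed rg sc [GV (sc e), GE e] (Some [GE e])"
| er: "e \<in> Ed \<Longrightarrow> gis_rel V Ed rg sc [GE e, GV (rg e)] (Some [GE e])"
| ri: "e \<in> Ed \<Longrightarrow> gis_rel V Ed rg sc [GV (rg e), GI e] (Some [GI e])"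
| isv: "e \<in> Ed \<Longrightarrow> gis_rel V Ed rg sc [GI e, GV (sc e)] (Some [GI e])"
| ie_eq: "e \<in> Ed \<Longrightarrow> gis_rel V Ed rg sc [GI e, GE e] (Some [GV (rg e)])"
| ie_ne: "e \<in> Ed \<Longrightarrow> f \<in> Ed \<Longrightarrow> e \<noteq> f \<Longrightarrow> gis_rel V Ed rg sc [GI e, GE f] None"

text \<open>The congruence on (free semigroup with zero) generated by the relations:
  equivalence closure of applying a relation inside an arbitrary context u _ w;
  zero is absorbing, so a word containing a subword equal to zero is zero.\<close>
inductive gis_eq :: "'v set \<Rightarrow> 'e set \<Rightarrow> ('e \<Rightarrow> 'v) \<Rightarrow> ('e \<Rightarrow> 'v)
    \<Rightarrow> ('v, 'e) gen list option \<Rightarrow> ('v, 'e) gen list option \<Rightarrow> bool"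
  for V Ed rg sc where
  refl: "gis_eq V Ed rg sc x x"
| sym: "gis_eq V Ed rg sc x y \<Longrightarrow> gis_eq V Ed rg sc y x"
| trans: "gis_eq V Ed rg sc x y \<Longrightarrow> gis_eq V Ed rg sc y z \<Longrightarrow> gis_eq V Ed rg sc x z"
| step: "gis_rel V Ed rg sc l r \<Longrightarrow>
     gis_eq V Ed rg sc (Some (u @ l @ w)) (map_option (\<lambda>y. u @ y @ w) r)"

definition gis_zero :: "'v set \<Rightarrow> 'e set \<Rightarrow> ('e \<Rightarrow> 'v) \<Rightarrow> ('e \<Rightarrow> 'v)
    \<Rightarrow> ('v, 'e) gen list \<Rightarrow> bool" where
  "gis_zero V Ed rg sc w \<longleftrightarrow> gis_eq V Ed rg sc (Some w) None"

definition gis_nz :: "'v set \<Rightarrow> 'e set \<Rightarrow> ('e \<Rightarrow> 'v) \<Rightarrow> ('e \<Rightarrow> 'v)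
    \<Rightarrow> ('v, 'e) gen list \<Rightarrow> bool" where
  "gis_nz V Ed rg sc w \<longleftrightarrow> gis_word V Ed w \<and> \<not> gis_zero V Ed rg sc w"

text \<open>A G-grading of S(E): a map deg on the nonzero elements (given on
  representative words, constant on equivalence classes) into the group G,
  with deg(st) = deg(s) deg(t) whenever st is nonzero.\<close>
definition gis_grading :: "('g, 'm) monoid_scheme \<Rightarrow> 'v set \<Rightarrow> 'e set \<Rightarrow> ('e \<Rightarrow> 'v) \<Rightarrow> ('e \<Rightarrow> 'v)
    \<Rightarrow> (('v, 'e) gen list \<Rightarrow> 'g) \<Rightarrow> bool" where
  "gis_grading G V Ed rg sc deg \<longleftrightarrow>
     group G \<and>
     (\<forall>w. gis_nz V Ed rg sc w \<longrightarrow> deg w \<in> carrier G) \<and>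
     (\<forall>u w. gis_nz V Ed rg sc u \<and> gis_nz V Ed rg sc w \<and> gis_eq V Ed rg sc (Some u) (Some w)
            \<longrightarrow> deg u = deg w) \<and>
     (\<forall>u w. gis_nz V Ed rg sc u \<and> gis_nz V Ed rg sc w \<and> gis_nz V Ed rg sc (u @ w)
            \<longrightarrow> deg (u @ w) = deg u \<otimes>\<^bsub>G\<^esub> deg w)"

definition gis_grading_trivial :: "('g, 'm) monoid_scheme \<Rightarrow> 'v set \<Rightarrow> 'e set \<Rightarrow> ('e \<Rightarrow> 'v) \<Rightarrow> ('e \<Rightarrow> 'v)
    \<Rightarrow> (('v, 'e) gen list \<Rightarrow> 'g) \<Rightarrow> bool" where
  "gis_grading_trivial G V Ed rg sc deg \<longleftrightarrow>
     (\<forall>w. gis_nz V Ed rg sc w \<longrightarrow> deg w = \<one>\<^bsub>G\<^esub>)"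

text \<open>Strong grading: S_a S_b = S_(ab) for all a, b in G, where
  S_a = (nonzero elements of degree a) together with 0.  Since 0 lies in both
  sides, this is: every nonzero element of degree ab is a product of a nonzero
  element of degree a and one of degree b, and every nonzero such product has
  degree ab.\<close>
definition gis_grading_strong :: "('g, 'm) monoid_scheme \<Rightarrow> 'v set \<Rightarrow> 'e set \<Rightarrow> ('e \<Rightarrow> 'v) \<Rightarrow> ('e \<Rightarrow> 'v)
    \<Rightarrow> (('v, 'e) gen list \<Rightarrow> 'g) \<Rightarrow> bool" where
  "gis_grading_strong G V Ed rg sc deg \<longleftrightarrow>
     (\<forall>a\<in>carrier G. \<forall>b\<in>carrier G.
        (\<forall>x. gis_nz V Ed rg sc x \<and> deg x = a \<otimes>\<^bsub>G\<^esub> b \<longrightarrow>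
           (\<exists>y z. gis_nz V Ed rg sc y \<and> gis_nz V Ed rg sc z \<and> deg y = a \<and> deg z = b \<and>
                  gis_eq V Ed rg sc (Some (y @ z)) (Some x))) \<and>
        (\<forall>y z. gis_nz V Ed rg sc y \<and> gis_nz V Ed rg sc z \<and> deg y = a \<and> deg z = b \<and>
               gis_nz V Ed rg sc (y @ z) \<longrightarrow> deg (y @ z) = a \<otimes>\<^bsub>G\<^esub> b))"

definition nontrivial_strong_grading :: "('g, 'm) monoid_scheme \<Rightarrow> 'v set \<Rightarrow> 'e set \<Rightarrow> ('e \<Rightarrow> 'v) \<Rightarrow> ('e \<Rightarrow> 'v)
    \<Rightarrow> (('v, 'e) gen list \<Rightarrow> 'g) \<Rightarrow> bool" where
  "nontrivial_strong_grading G V Ed rg sc deg \<longleftrightarrow>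
     gis_grading G V Ed rg sc deg \<and> \<not> gis_grading_trivial G V Ed rg sc deg \<and>
     gis_grading_strong G V Ed rg sc deg"

definition is_source :: "'v set \<Rightarrow> 'e set \<Rightarrow> ('e \<Rightarrow> 'v) \<Rightarrow> 'v \<Rightarrow> bool" where
  "is_source V Ed rg v \<longleftrightarrow> v \<in> V \<and> (\<forall>e\<in>Ed. rg e \<noteq> v)"

end

theory Submission
  imports Defs
begin

fun act_gen :: "('e \<Rightarrow> 'v) \<Rightarrow> ('e \<Rightarrow> 'v) \<Rightarrow> ('v, 'e) gen \<Rightarrow> ('v \<times> 'e list) \<Rightarrow> ('v \<times> 'e list) option" where
  "act_gen rg sc (GV v) (s, p) = (if s = v then Some (s, p) else None)"
| "act_gen rg sc (GE e) (s, p) = (if s = rg e then Some (sc e, e # p) else None)"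
| "act_gen rg sc (GI e) (s, p) = (if s = sc e \<and> p \<noteq> [] \<and> hd p = e then Some (rg e, tl p) else None)"

fun act_w :: "('e \<Rightarrow> 'v) \<Rightarrow> ('e \<Rightarrow> 'v) \<Rightarrow> ('v, 'e) gen list \<Rightarrow> ('v \<times> 'e list) \<Rightarrow> ('v \<times> 'e list) option" where
  "act_w rg sc [] x = Some x"
| "act_w rg sc (g # w) x = Option.bind (act_w rg sc w x) (act_gen rg sc g)"

definition actO where
  "actO rg sc x = (case x of None \<Rightarrow> (\<lambda>_. None) | Some w \<Rightarrow> act_w rg sc w)"

lemma act_w_append: "act_w rg sc (u @ w) x = Option.bind (act_w rg sc w x) (act_w rg sc u)"
  by (induction u) (auto simp: bind_assoc)

lemma act_rel: "gis_rel V Ed rg sc l r \<Longrightarrow> act_w rg sc l = actO rg sc r"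
proof (induction rule: gis_rel.induct)
qed (auto simp: actO_def fun_eq_iff split: option.splits bind_split)

lemma act_eq: "gis_eq V Ed rg sc x y \<Longrightarrow> actO rg sc x = actO rg sc y"
proof (induction rule: gis_eq.induct)
  case (step l r u w)
  show ?case
  proof (cases r)
    case None
    then show ?thesis using act_rel[OF step]
      by (auto simp: actO_def fun_eq_iff act_w_append split: bind_split)
  next
    case (Some a)
    have h: "\<And>z. act_w rg sc l z = act_w rg sc a z" using act_rel[OF step] Some
      by (simp add: actO_def)
    show ?thesis using Some
      by (simp add: actO_def fun_eq_iff act_w_append h)
  qed
qed auto

lemma gis_eq_ctx: "gis_eq V Ed rg sc x y \<Longrightarrow>
  gis_eq V Ed rg sc (map_option (\<lambda>w. u @ w @ w') x) (map_option (\<lambda>w. u @ w @ w') y)"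
proof (induction rule: gis_eq.induct)
  case (step l r u0 w0)
  have "gis_eq V Ed rg sc (Some ((u @ u0) @ l @ (w0 @ w'))) (map_option (\<lambda>y. (u @ u0) @ y @ (w0 @ w')) r)"
    by (rule gis_eq.step[OF step])
  then show ?case by (simp add: option.map_comp o_def)
next
  case (refl x) show ?case by (rule gis_eq.refl)
next
  case (sym x y) show ?case by (rule gis_eq.sym[OF sym.IH])
next
  case (trans x y z) show ?case by (rule gis_eq.trans[OF trans.IH(1) trans.IH(2)])
qed

lemma gis_eq_ctx_Some: "gis_eq V Ed rg sc (Some a) (Some b) \<Longrightarrow>
  gis_eq V Ed rg sc (Some (u @ a @ w')) (Some (u @ b @ w'))"
  using gis_eq_ctx[of V Ed rg sc "Some a" "Some b" u w'] by simp

lemma gis_eq_ctx_None: "gis_eq V Ed rg sc (Some a) None \<Longrightarrow>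
  gis_eq V Ed rg sc (Some (u @ a @ w')) None"
  using gis_eq_ctx[of V Ed rg sc "Some a" None u w'] by simp

lemma not_zero_act: "act_w rg sc w x \<noteq> None \<Longrightarrow> \<not> gis_zero V Ed rg sc w"
  unfolding gis_zero_def using act_eq[of V Ed rg sc "Some w" None]
  by (metis actO_def option.case(1) option.case(2))

lemma source_lemma:
  assumes "set y \<subseteq> gis_gens V Ed" "y \<noteq> []" "act_w rg sc y x = Some (v, [])"
    "\<forall>e\<in>Ed. rg e \<noteq> v"
  shows "gis_eq V Ed rg sc (Some y) (Some [GV v])"
  using assms
proof (induction y)
  case Nil then show ?case by simp
next
  case (Cons g y')
  from Cons.prems(3) obtain m where m: "act_w rg sc y' x = Some m" "act_gen rg sc g m = Some (v, [])"
    by (auto split: bind_split_asm)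
  obtain s p where sp: "m = (s, p)" by force
  have g: "g = GV v \<and> m = (v, [])"
  proof (cases g)
    case (GV w) then show ?thesis using m sp by (auto split: if_splits)
  next
    case (GE e) then show ?thesis using m sp by (auto split: if_splits)
  next
    case (GI e)
    then have "e \<in> Ed" using Cons.prems(1) by (auto simp: gis_gens_def)
    then show ?thesis using GI m sp Cons.prems(4) by (auto split: if_splits)
  qed
  show ?case
  proof (cases "y' = []")
    case True then show ?thesis using g by (simp add: gis_eq.refl)
  next
    case False
    have "gis_eq V Ed rg sc (Some y') (Some [GV v])"
      using Cons False m g by auto
    then have "gis_eq V Ed rg sc (Some ([GV v] @ y' @ [])) (Some ([GV v] @ [GV v] @ []))"
      by (rule gis_eq_ctx_Some)
    moreover have "gis_eq V Ed rg sc (Some ([] @ [GV v, GV v] @ [])) (map_option (\<lambda>y. [] @ y @ []) (Some [GV v]))"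
      using Cons.prems(1) g by (intro gis_eq.step gis_rel.vv_eq) (auto simp: gis_gens_def)
    ultimately have "gis_eq V Ed rg sc (Some ([GV v] @ y' @ [])) (Some [GV v])"
      using gis_eq.trans by fastforce
    then show ?thesis using g by simp
  qed
qed


lemma zero_transfer:
  assumes "gis_eq V Ed rg sc (Some (y @ z)) (Some x)" "\<not> gis_zero V Ed rg sc x"
  shows "\<not> gis_zero V Ed rg sc y \<and> \<not> gis_zero V Ed rg sc z"
proof (intro conjI notI)
  assume "gis_zero V Ed rg sc y"
  then have "gis_eq V Ed rg sc (Some ([] @ y @ z)) None"
    unfolding gis_zero_def by (rule gis_eq_ctx_None)
  then have "gis_eq V Ed rg sc (Some (y @ z)) None" by simp
  then have "gis_eq V Ed rg sc (Some x) None"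
    by (rule gis_eq.trans[OF gis_eq.sym[OF assms(1)]])
  then show False using assms(2) unfolding gis_zero_def by simp
next
  assume "gis_zero V Ed rg sc z"
  then have "gis_eq V Ed rg sc (Some (y @ z @ [])) None"
    unfolding gis_zero_def by (rule gis_eq_ctx_None)
  then have "gis_eq V Ed rg sc (Some (y @ z)) None" by simp
  then have "gis_eq V Ed rg sc (Some x) None"
    by (rule gis_eq.trans[OF gis_eq.sym[OF assms(1)]])
  then show False using assms(2) unfolding gis_zero_def by simp
qed

definition isE :: "('v, 'e) gen \<Rightarrow> bool" where
  "isE g = (case g of GV _ \<Rightarrow> False | _ \<Rightarrow> True)"

definition cnt :: "('v, 'e) gen list \<Rightarrow> nat" where
  "cnt w = length (filter isE w)"

lemma cnt_append[simp]: "cnt (u @ w) = cnt u + cnt w"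
  by (simp add: cnt_def)

lemma par_rel: "gis_rel V Ed rg sc l r \<Longrightarrow> r = Some m \<Longrightarrow> even (cnt l) = even (cnt m)"
  by (induction rule: gis_rel.induct) (auto simp: cnt_def isE_def)

lemma par_eq: "gis_eq V Ed rg sc x y \<Longrightarrow> x = Some u \<Longrightarrow> y = Some w \<Longrightarrow>
   \<not> gis_eq V Ed rg sc x None \<Longrightarrow> even (cnt u) = even (cnt w)"
proof (induction arbitrary: u w rule: gis_eq.induct)
  case (sym x y)
  have xy: "gis_eq V Ed rg sc y x" using sym.hyps(1) by (rule gis_eq.sym)
  have "\<not> gis_eq V Ed rg sc x None"
  proof
    assume "gis_eq V Ed rg sc x None"
    with xy have "gis_eq V Ed rg sc y None" by (rule gis_eq.trans)
    with sym.prems(3) show False by simp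
  qed
  then have "even (cnt w) = even (cnt u)" using sym.IH sym.prems(1,2) by blast
  then show ?case by simp
next
  case (trans x y z)
  show ?case
  proof (cases y)
    case None then show ?thesis using trans.hyps(1) trans.prems(3) by simp
  next
    case (Some m)
    have ny: "\<not> gis_eq V Ed rg sc y None"
    proof
      assume "gis_eq V Ed rg sc y None"
      with trans.hyps(1) have "gis_eq V Ed rg sc x None" by (rule gis_eq.trans)
      with trans.prems(3) show False by simp
    qed
    have 1: "even (cnt u) = even (cnt m)" using trans.IH(1) trans.prems(1,3) Some by blast
    have 2: "even (cnt m) = even (cnt w)" using trans.IH(2) trans.prems(2) Some ny by blast
    show ?thesis using 1 2 by simp
  qed
next
  case (step l r u0 w0)
  then obtain m where m: "r = Some m" by auto
  have "even (cnt l) = even (cnt m)" using par_rel[OF step(1) m] .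
  then show ?case using step m by auto
qed auto

lemma right_vertex:
  assumes "gis_word V Ed x" and graph: "\<forall>e\<in>Ed. sc e \<in> V \<and> rg e \<in> V"
  shows "\<exists>u\<in>V. gis_eq V Ed rg sc (Some (x @ [GV u])) (Some x)"
proof -
  obtain x0 g where x: "x = x0 @ [g]" using assms(1) unfolding gis_word_def
    by (metis rev_exhaust)
  have g: "g \<in> gis_gens V Ed" using assms(1) x unfolding gis_word_def by auto
  show ?thesis
  proof (cases g)
    case (GV v)
    then have "v \<in> V" using g by (auto simp: gis_gens_def)
    moreover have "gis_eq V Ed rg sc (Some (x0 @ [GV v, GV v] @ [])) (map_option (\<lambda>y. x0 @ y @ []) (Some [GV v]))"
      by (intro gis_eq.step gis_rel.vv_eq) fact
    ultimately show ?thesis using x GV by (intro bexI[of _ v]) auto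
  next
    case (GE e)
    then have "e \<in> Ed" using g by (auto simp: gis_gens_def)
    moreover have "gis_eq V Ed rg sc (Some (x0 @ [GE e, GV (rg e)] @ [])) (map_option (\<lambda>y. x0 @ y @ []) (Some [GE e]))"
      by (intro gis_eq.step gis_rel.er) fact
    ultimately show ?thesis using x GE graph by (intro bexI[of _ "rg e"]) auto
  next
    case (GI e)
    then have "e \<in> Ed" using g by (auto simp: gis_gens_def)
    moreover have "gis_eq V Ed rg sc (Some (x0 @ [GI e, GV (sc e)] @ [])) (map_option (\<lambda>y. x0 @ y @ []) (Some [GI e]))"
      by (intro gis_eq.step gis_rel.isv) fact
    ultimately show ?thesis using x GI graph by (intro bexI[of _ "sc e"]) auto
  qed
qed

definition Z2 :: "('v, 'e) gen list set monoid" where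
  "Z2 = \<lparr>carrier = {{}, UNIV}, monoid.mult = (\<lambda>A B. if A = B then {} else UNIV), one = {}\<rparr>"

lemma UNIV_ne: "(UNIV :: ('v, 'e) gen list set) \<noteq> {}" by auto

lemma Z2_cases: "x \<in> carrier (Z2 :: ('v, 'e) gen list set monoid) \<Longrightarrow> x = {} \<or> x = UNIV"
  by (simp add: Z2_def)

lemma Z2_mult: "x \<otimes>\<^bsub>(Z2 :: ('v, 'e) gen list set monoid)\<^esub> y = (if x = y then {} else UNIV)"
  by (simp add: Z2_def)

lemma Z2_group: "group (Z2 :: ('v, 'e) gen list set monoid)"
proof (rule groupI)
  fix x y z :: "('v, 'e) gen list set"
  assume "x \<in> carrier Z2" "y \<in> carrier Z2" "z \<in> carrier Z2"
  then show "x \<otimes>\<^bsub>Z2\<^esub> y \<otimes>\<^bsub>Z2\<^esub> z = x \<otimes>\<^bsub>Z2\<^esub> (y \<otimes>\<^bsub>Z2\<^esub> z)"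
    using UNIV_ne[where 'v='v and 'e='e] unfolding Z2_mult
    by (metis Z2_cases)
next
  fix x :: "('v, 'e) gen list set"
  assume "x \<in> carrier Z2"
  then show "\<exists>y\<in>carrier Z2. y \<otimes>\<^bsub>Z2\<^esub> x = \<one>\<^bsub>Z2\<^esub>"
    by (intro bexI[of _ x]) (simp_all add: Z2_def)
qed (auto simp: Z2_def)

definition pdeg :: "('v, 'e) gen list \<Rightarrow> ('v, 'e) gen list set" where
  "pdeg w = (if even (cnt w) then {} else UNIV)"

lemma dir1:
  fixes V :: "'v set" and Ed :: "'e set" and rg sc :: "'e \<Rightarrow> 'v" and G :: "'g monoid"
  assumes graph: "\<forall>e\<in>Ed. sc e \<in> V \<and> rg e \<in> V"
    and ns: "nontrivial_strong_grading G V Ed rg sc deg"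
  shows "V \<noteq> {} \<and> (\<forall>v. \<not> is_source V Ed rg v)"
proof (intro conjI allI)
  from ns have gr: "gis_grading G V Ed rg sc deg" and nt: "\<not> gis_grading_trivial G V Ed rg sc deg"
    and st: "gis_grading_strong G V Ed rg sc deg"
    unfolding nontrivial_strong_grading_def by auto
  then have grp: "group G" unfolding gis_grading_def by auto
  interpret group G by (rule grp)
  from nt obtain x where x: "gis_nz V Ed rg sc x" "deg x \<noteq> \<one>\<^bsub>G\<^esub>"
    unfolding gis_grading_trivial_def by auto
  show "V \<noteq> {}"
  proof
    assume "V = {}"
    then have "Ed = {}" using graph by auto
    then show False using x \<open>V = {}\<close> by (auto simp: gis_nz_def gis_word_def gis_gens_def)
  qed
  fix v
  show "\<not> is_source V Ed rg v"
  proof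
    assume src: "is_source V Ed rg v"
    then have vV: "v \<in> V" and noin: "\<forall>e\<in>Ed. rg e \<noteq> v" unfolding is_source_def by auto
    have nzv: "gis_nz V Ed rg sc [GV v]"
      using vV by (auto simp: gis_nz_def gis_word_def gis_gens_def intro!: not_zero_act[where x="(v, [])"])
    have nzvv: "gis_nz V Ed rg sc ([GV v] @ [GV v])"
      using vV by (auto simp: gis_nz_def gis_word_def gis_gens_def intro!: not_zero_act[where x="(v, [])"])
    have eqvv: "gis_eq V Ed rg sc (Some ([] @ [GV v, GV v] @ [])) (map_option (\<lambda>y. [] @ y @ []) (Some [GV v]))"
      by (intro gis_eq.step gis_rel.vv_eq) fact
    have gcar: "\<And>w. gis_nz V Ed rg sc w \<Longrightarrow> deg w \<in> carrier G"
      using gr unfolding gis_grading_def by blast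
    have geq: "\<And>u w. gis_nz V Ed rg sc u \<Longrightarrow> gis_nz V Ed rg sc w \<Longrightarrow>
        gis_eq V Ed rg sc (Some u) (Some w) \<Longrightarrow> deg u = deg w"
      using gr unfolding gis_grading_def by blast
    have gmul: "\<And>u w. gis_nz V Ed rg sc u \<Longrightarrow> gis_nz V Ed rg sc w \<Longrightarrow>
        gis_nz V Ed rg sc (u @ w) \<Longrightarrow> deg (u @ w) = deg u \<otimes>\<^bsub>G\<^esub> deg w"
      using gr unfolding gis_grading_def by blast
    have dv: "deg [GV v] \<in> carrier G" using gcar[OF nzv] .
    have "deg ([GV v] @ [GV v]) = deg [GV v]"
      using geq[OF nzvv nzv] eqvv by simp
    moreover have "deg ([GV v] @ [GV v]) = deg [GV v] \<otimes>\<^bsub>G\<^esub> deg [GV v]"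
      using gmul[OF nzv nzv nzvv] .
    ultimately have dv1: "deg [GV v] = \<one>\<^bsub>G\<^esub>" using dv by simp
    define a where "a = deg x"
    have a: "a \<in> carrier G" using gcar[OF x(1)] a_def by simp
    have ia: "inv\<^bsub>G\<^esub> a \<in> carrier G" using a by simp
    have aia: "deg [GV v] = a \<otimes>\<^bsub>G\<^esub> inv\<^bsub>G\<^esub> a" using a dv1 by simp
    have "\<forall>x. gis_nz V Ed rg sc x \<and> deg x = a \<otimes>\<^bsub>G\<^esub> inv\<^bsub>G\<^esub> a \<longrightarrow>
           (\<exists>y z. gis_nz V Ed rg sc y \<and> gis_nz V Ed rg sc z \<and> deg y = a \<and> deg z = inv\<^bsub>G\<^esub> a \<and>
                  gis_eq V Ed rg sc (Some (y @ z)) (Some x))"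
      using st a ia unfolding gis_grading_strong_def by blast
    then obtain y z where yz: "gis_nz V Ed rg sc y" "gis_nz V Ed rg sc z" "deg y = a"
       "gis_eq V Ed rg sc (Some (y @ z)) (Some [GV v])"
      using nzv aia by blast
    have "actO rg sc (Some (y @ z)) = actO rg sc (Some [GV v])" using act_eq[OF yz(4)] .
    then have "act_w rg sc (y @ z) (v, []) = Some (v, [])" by (simp add: actO_def)
    then obtain m where "act_w rg sc y m = Some (v, [])"
      by (auto simp: act_w_append split: bind_split_asm)
    then have "gis_eq V Ed rg sc (Some y) (Some [GV v])"
      using yz(1) noin by (intro source_lemma) (auto simp: gis_nz_def gis_word_def)
    then have "deg y = deg [GV v]" using geq[OF yz(1) nzv] by simp
    then show False using x yz(3) dv1 a_def by simp
  qed
qed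

lemma dir2:
  fixes V :: "'v set" and Ed :: "'e set" and rg sc :: "'e \<Rightarrow> 'v"
  assumes graph: "\<forall>e\<in>Ed. sc e \<in> V \<and> rg e \<in> V"
    and H: "V \<noteq> {} \<and> (\<forall>v. \<not> is_source V Ed rg v)"
  shows "nontrivial_strong_grading (Z2 :: ('v, 'e) gen list set monoid) V Ed rg sc pdeg"
proof -
  have nosrc: "\<exists>f\<in>Ed. rg f = u" if "u \<in> V" for u
    using H that unfolding is_source_def by auto
  from H obtain v where vV: "v \<in> V" by auto
  obtain f0 where f0: "f0 \<in> Ed" "rg f0 = v" using nosrc[OF vV] by auto
  have mul: "pdeg (u @ w) = pdeg u \<otimes>\<^bsub>Z2\<^esub> pdeg w" for u w :: "('v, 'e) gen list"
    using UNIV_ne[where 'v='v and 'e='e] by (auto simp: pdeg_def Z2_def)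
  have gr: "gis_grading Z2 V Ed rg sc pdeg"
    unfolding gis_grading_def
  proof (intro conjI allI impI Z2_group)
    fix w show "pdeg w \<in> carrier Z2" by (simp add: pdeg_def Z2_def)
  next
    fix u w assume "gis_nz V Ed rg sc u \<and> gis_nz V Ed rg sc w \<and> gis_eq V Ed rg sc (Some u) (Some w)"
    then show "pdeg u = pdeg w"
      using par_eq[of V Ed rg sc "Some u" "Some w" u w]
      by (auto simp: pdeg_def gis_nz_def gis_zero_def)
  next
    fix u w :: "('v, 'e) gen list" show "pdeg (u @ w) = pdeg u \<otimes>\<^bsub>Z2\<^esub> pdeg w" by (rule mul)
  qed
  have nt: "\<not> gis_grading_trivial Z2 V Ed rg sc pdeg"
  proof -
    have "gis_nz V Ed rg sc [GE f0]"
      using f0 by (auto simp: gis_nz_def gis_word_def gis_gens_def intro!: not_zero_act[where x="(v, [])"])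
    moreover have "pdeg [GE f0] \<noteq> \<one>\<^bsub>Z2\<^esub>"
      using UNIV_ne[where 'v='v and 'e='e] by (simp add: pdeg_def Z2_def cnt_def isE_def)
    ultimately show ?thesis unfolding gis_grading_trivial_def by auto
  qed
  have st: "gis_grading_strong Z2 V Ed rg sc pdeg"
    unfolding gis_grading_strong_def
  proof (intro ballI conjI allI impI)
    fix a b y z
    assume "gis_nz V Ed rg sc y \<and> gis_nz V Ed rg sc z \<and> pdeg y = a \<and> pdeg z = b \<and> gis_nz V Ed rg sc (y @ z)"
    then show "pdeg (y @ z) = a \<otimes>\<^bsub>Z2\<^esub> b" using mul by auto
  next
    fix a b x
    assume ab: "a \<in> carrier Z2" "b \<in> carrier Z2"
      and xh: "gis_nz V Ed rg sc x \<and> pdeg x = a \<otimes>\<^bsub>Z2\<^esub> b"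
    then have xw: "gis_word V Ed x" and xz: "\<not> gis_zero V Ed rg sc x"
      by (auto simp: gis_nz_def)
    obtain u where u: "u \<in> V" "gis_eq V Ed rg sc (Some (x @ [GV u])) (Some x)"
      using right_vertex[OF xw graph] by auto
    obtain f where f: "f \<in> Ed" "rg f = u" using nosrc[OF u(1)] by auto
    show "\<exists>y z. gis_nz V Ed rg sc y \<and> gis_nz V Ed rg sc z \<and> pdeg y = a \<and> pdeg z = b \<and>
                  gis_eq V Ed rg sc (Some (y @ z)) (Some x)"
    proof (cases "b = {}")
      case True
      have "gis_nz V Ed rg sc [GV u]"
        using zero_transfer[OF u(2) xz] u(1) by (auto simp: gis_nz_def gis_word_def gis_gens_def)
      moreover have "pdeg x = a" using xh ab True by (auto simp: Z2_def pdeg_def)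
      moreover have "pdeg [GV u] = b" using True by (simp add: pdeg_def cnt_def isE_def)
      ultimately show ?thesis using xh u(2) by blast
    next
      case False
      then have bU: "b = UNIV" using ab by (auto simp: Z2_def)
      have "gis_eq V Ed rg sc (Some (x @ [GI f, GE f] @ [])) (map_option (\<lambda>y. x @ y @ []) (Some [GV (rg f)]))"
        by (intro gis_eq.step gis_rel.ie_eq) fact
      then have "gis_eq V Ed rg sc (Some ((x @ [GI f]) @ [GE f])) (Some (x @ [GV u]))"
        using f(2) by simp
      then have e1: "gis_eq V Ed rg sc (Some ((x @ [GI f]) @ [GE f])) (Some x)"
        using u(2) by (rule gis_eq.trans)
      have "gis_nz V Ed rg sc (x @ [GI f])" "gis_nz V Ed rg sc [GE f]"
        using zero_transfer[OF e1 xz] xw f(1)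
        by (auto simp: gis_nz_def gis_word_def gis_gens_def)
      moreover have "pdeg (x @ [GI f]) = a"
        using xh ab bU mul[of x "[GI f]"] UNIV_ne[where 'v='v and 'e='e]
        by (auto simp: Z2_def pdeg_def cnt_def isE_def)
      moreover have "pdeg [GE f] = b" using bU by (simp add: pdeg_def cnt_def isE_def)
      ultimately show ?thesis using e1 by blast
    qed
  qed
  show ?thesis using gr nt st unfolding nontrivial_strong_grading_def by blast
qed

theorem theorem8p8:
  fixes V :: "'v set" and Ed :: "'e set" and rg sc :: "'e \<Rightarrow> 'v"
  assumes graph: "\<forall>e\<in>Ed. sc e \<in> V \<and> rg e \<in> V"
  shows "(\<forall>(G :: 'g monoid) deg. nontrivial_strong_grading G V Ed rg sc deg
            \<longrightarrow> V \<noteq> {} \<and> (\<forall>v. \<not> is_source V Ed rg v))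
       \<and> (V \<noteq> {} \<and> (\<forall>v. \<not> is_source V Ed rg v)
            \<longrightarrow> (\<exists>(G :: ('v, 'e) gen list set monoid) deg. nontrivial_strong_grading G V Ed rg sc deg))"
  using dir1[OF graph] dir2[OF graph] by blast

end
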